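(* Let $V$ be one of the following algebraic tensor products of $\mathfrak{sl}(2,\mathbb{C})$-modules: (i) $N(0,b)\otimes N(a,0)$ with $a,b\in\mathbb{R}_{<0}$; (ii) $N(-1-x+iy,x+iy)\otimes N(a,0)$ with $-1\le x<0$, $y\in\mathbb{R}_{>0}$, $a\in\mathbb{R}_{<0}$; (iii) $N(a_1,a_2)\otimes N(a,0)$ with $-1<a_1,a_2<0$, $a\in\mathbb{R}_{<0}$. Write the first factor as $N(b_1,b_2)$ (so $(b_1,b_2)=(0,b)$, resp. $(-1-x+iy,x+iy)$, resp. $(a_1,a_2)$), let $x(k)$ be its standard basis, let $y(l)=x(-l)$ ($l\in\mathbb{Z}_{\ge0}$) be the reindexed standard basis of $N(a,0)$, and put $z(k,l)=x(k)\otimes y(l)$. For $n_0\in\mathbb{Z}$ let $V_{n_0}$ be the weight space of $V$ of weight $b_1-b_2+a+2n_0$ (spanned by the $z(k,l)$ with $k-l=n_0$), let $l_0$ be the smallest $l\in\mathbb{Z}_{\ge0}$ for which $z(l+n_0,l)$ is defined (i.e. $l+n_0$ is an index of the basis of the first factor), and set $z_{n_0}=z(l_0+n_0,l_0)$. Let $\mathfrak{c}=\mathbb{C}\,(FE)$, so that $\mathcal{U}(\mathfrak{c})=\mathbb{C}[FE]\subset\mathcal{U}(\mathfrak{sl}(2,\mathbb{C}))$. Then: (1) as a $\mathcal{U}(\mathfrak{c})$-module, $V_{n_0}$ is cyclic, generated by $z_{n_0}$; (2) the map $\rho_{n_0}:\mathcal{U}(\mathfrak{c})\to V_{n_0}$,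 $\rho_{n_0}(u)=u\cdot z_{n_0}$, is a bijection.
   Context: $\mathfrak{sl}(2,\mathbb{C})$ has basis $H,E,F$ with $[H,E]=2E$, $[H,F]=-2F$, $[E,F]=H$; it acts on tensor products by $X(v\otimes w)=Xv\otimes w+v\otimes Xw$. For $(c_1,c_2)\in\mathbb{C}^2$ let $\mathcal{K}(c_1,c_2)$ be the set of $k\in\mathbb{Z}$ such that for each $i\in\{1,2\}$ with $c_i\in\mathbb{Z}$ one has ($c_i+(-1)^{i-1}k<0$ iff $c_i<0$). The module $N(c_1,c_2)$ has basis $\{x(k):k\in\mathcal{K}(c_1,c_2)\}$ (the "standard basis"; $x(k):=0$ for $k\notin\mathcal{K}$), with $H\cdot x(k)=(c_1-c_2+2k)x(k)$ and: (I) if neither $c_1$ nor $c_2$ is a negative integer: $E x(k)=(c_2-k)x(k+1)$, $F x(k)=(c_1+k)x(k-1)$; (II) if $c_1$ is not a negative integer and $c_2$ is: $E x(k)=x(k+1)$, $F x(k)=(c_1+k)(c_2-k+1)x(k-1)$; (III) if $c_1$ is a negative integer and $c_2$ is not: $E x(k)=(c_1+k+1)(c_2-k)x(k+1)$, $F x(k)=x(k-1)$; (IV) if both are negative integers: $E x(k)=(c_1+k+1)x(k+1)$, $F x(k)=(c_2-k+1)x(k-1)$. For $a<0$ the index set of $N(a,0)$ is contained in $\mathbb{Z}_{\le 0}$, whence the reindexing $y(l)=x(-l)$. *)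

theory Defs
  imports Complex_Main "HOL-Computational_Algebra.Polynomial"
begin

definition negint :: "complex \<Rightarrow> bool" where
  "negint c \<longleftrightarrow> (\<exists>n::int. n < 0 \<and> c = of_int n)"

text \<open>Index set K(c1,c2); for an integer c, "c < 0" means Re c < 0.\<close>
definition inK :: "complex \<Rightarrow> complex \<Rightarrow> int \<Rightarrow> bool" where
  "inK c1 c2 k \<longleftrightarrow>
     (c1 \<in> \<int> \<longrightarrow> (Re (c1 + of_int k) < 0 \<longleftrightarrow> Re c1 < 0)) \<and>
     (c2 \<in> \<int> \<longrightarrow> (Re (c2 - of_int k) < 0 \<longleftrightarrow> Re c2 < 0))"

text \<open>E x(k) = eN c1 c2 k * x(k+1),  F x(k) = fN c1 c2 k * x(k-1),  H x(k) = hN c1 c2 k * x(k).\<close>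
definition eN :: "complex \<Rightarrow> complex \<Rightarrow> int \<Rightarrow> complex" where
  "eN c1 c2 k =
    (if \<not> negint c1 \<and> \<not> negint c2 then c2 - of_int k
     else if \<not> negint c1 \<and> negint c2 then 1
     else if negint c1 \<and> \<not> negint c2 then (c1 + of_int k + 1) * (c2 - of_int k)
     else c1 + of_int k + 1)"

definition fN :: "complex \<Rightarrow> complex \<Rightarrow> int \<Rightarrow> complex" where
  "fN c1 c2 k =
    (if \<not> negint c1 \<and> \<not> negint c2 then c1 + of_int k
     else if \<not> negint c1 \<and> negint c2 then (c1 + of_int k) * (c2 - of_int k + 1)
     else if negint c1 \<and> \<not> negint c2 then 1
     else c2 - of_int k + 1)"

definition hN :: "complex \<Rightarrow> complex \<Rightarrow> int \<Rightarrow> complex" where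
  "hN c1 c2 k = c1 - c2 + 2 * of_int k"

text \<open>Tensor product N(c1,c2) \<otimes> N(d1,d2): vectors are finitely supported coefficient
  functions on pairs (k,m) of indices; the basis vector tz k m is x(k) \<otimes> x(m)
  (and is 0 if k or m is not an index, matching the convention x(k) = 0).\<close>

type_synonym tvec = "int \<times> int \<Rightarrow> complex"

definition tB :: "complex \<Rightarrow> complex \<Rightarrow> complex \<Rightarrow> complex \<Rightarrow> (int \<times> int) set" where
  "tB c1 c2 d1 d2 = {(k, m). inK c1 c2 k \<and> inK d1 d2 m}"

definition tz :: "complex \<Rightarrow> complex \<Rightarrow> complex \<Rightarrow> complex \<Rightarrow> int \<Rightarrow> int \<Rightarrow> tvec" where
  "tz c1 c2 d1 d2 k m = (\<lambda>p. if p = (k, m) \<and> (k, m) \<in> tB c1 c2 d1 d2 then 1 else 0)"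

definition tV :: "complex \<Rightarrow> complex \<Rightarrow> complex \<Rightarrow> complex \<Rightarrow> tvec set" where
  "tV c1 c2 d1 d2 = {v. finite {p. v p \<noteq> 0} \<and> {p. v p \<noteq> 0} \<subseteq> tB c1 c2 d1 d2}"

definition linext :: "(int \<times> int \<Rightarrow> tvec) \<Rightarrow> tvec \<Rightarrow> tvec" where
  "linext f v = (\<lambda>p. \<Sum>q\<in>{q. v q \<noteq> 0}. v q * f q p)"

definition tE :: "complex \<Rightarrow> complex \<Rightarrow> complex \<Rightarrow> complex \<Rightarrow> tvec \<Rightarrow> tvec" where
  "tE c1 c2 d1 d2 = linext (\<lambda>(k, m) p.
      eN c1 c2 k * tz c1 c2 d1 d2 (k + 1) m p + eN d1 d2 m * tz c1 c2 d1 d2 k (m + 1) p)"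

definition tF :: "complex \<Rightarrow> complex \<Rightarrow> complex \<Rightarrow> complex \<Rightarrow> tvec \<Rightarrow> tvec" where
  "tF c1 c2 d1 d2 = linext (\<lambda>(k, m) p.
      fN c1 c2 k * tz c1 c2 d1 d2 (k - 1) m p + fN d1 d2 m * tz c1 c2 d1 d2 k (m - 1) p)"

definition tH :: "complex \<Rightarrow> complex \<Rightarrow> complex \<Rightarrow> complex \<Rightarrow> tvec \<Rightarrow> tvec" where
  "tH c1 c2 d1 d2 = linext (\<lambda>(k, m) p.
      (hN c1 c2 k + hN d1 d2 m) * tz c1 c2 d1 d2 k m p)"

definition tWeight :: "complex \<Rightarrow> complex \<Rightarrow> complex \<Rightarrow> complex \<Rightarrow> complex \<Rightarrow> tvec set" where
  "tWeight c1 c2 d1 d2 w = {v \<in> tV c1 c2 d1 d2. tH c1 c2 d1 d2 v = (\<lambda>p. w * v p)}"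

text \<open>Action of an element p(FE) of U(c) = C[FE] (identified with a polynomial p).\<close>
definition actFE :: "complex \<Rightarrow> complex \<Rightarrow> complex \<Rightarrow> complex \<Rightarrow> complex poly \<Rightarrow> tvec \<Rightarrow> tvec" where
  "actFE c1 c2 d1 d2 P v =
     (\<lambda>p. \<Sum>i\<le>degree P. coeff P i * (((tF c1 c2 d1 d2 \<circ> tE c1 c2 d1 d2) ^^ i) v) p)"

end

theory Submission
  imports Defs
begin

lemma linext_two:
  assumes fin: "finite {q. v q \<noteq> 0}"
  shows "linext (\<lambda>(k,m) p. A k m * tz c1 c2 d1 d2 (k+s1) (m+t1) p + C k m * tz c1 c2 d1 d2 (k+s2) (m+t2) p) v (k',m')
   = (if (k',m') \<in> tB c1 c2 d1 d2 then v (k'-s1,m'-t1) * A (k'-s1) (m'-t1) + v (k'-s2,m'-t2) * C (k'-s2) (m'-t2) else 0)"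
proof -
  let ?S = "{q. v q \<noteq> 0}"
  let ?B = "tB c1 c2 d1 d2"
  have "linext (\<lambda>(k,m) p. A k m * tz c1 c2 d1 d2 (k+s1) (m+t1) p + C k m * tz c1 c2 d1 d2 (k+s2) (m+t2) p) v (k',m')
    = (\<Sum>q\<in>?S. (if q = (k'-s1,m'-t1) then (if (k',m') \<in> ?B then v q * A (k'-s1) (m'-t1) else 0) else 0)
               + (if q = (k'-s2,m'-t2) then (if (k',m') \<in> ?B then v q * C (k'-s2) (m'-t2) else 0) else 0))"
    unfolding linext_def
    apply (rule sum.cong, simp)
    apply (auto simp: tz_def distrib_left split: prod.splits)
    done
  also have "\<dots> = (if (k',m') \<in> ?B then v (k'-s1,m'-t1) * A (k'-s1) (m'-t1) + v (k'-s2,m'-t2) * C (k'-s2) (m'-t2) else 0)"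
    by (simp add: sum.distrib fin sum.delta cong: if_cong)
  finally show ?thesis .
qed

lemma tE_apply:
  assumes fin: "finite {q. v q \<noteq> 0}"
  shows "tE c1 c2 d1 d2 v (k,m) = (if (k,m) \<in> tB c1 c2 d1 d2 then
     v (k-1,m) * eN c1 c2 (k-1) + v (k,m-1) * eN d1 d2 (m-1) else 0)"
proof -
  have "tE c1 c2 d1 d2 = linext (\<lambda>(k,m) p. (\<lambda>k m. eN c1 c2 k) k m * tz c1 c2 d1 d2 (k+1) (m+0) p
      + (\<lambda>k m. eN d1 d2 m) k m * tz c1 c2 d1 d2 (k+0) (m+1) p)"
    unfolding tE_def by simp
  then show ?thesis using linext_two[OF fin, of "\<lambda>k m. eN c1 c2 k" c1 c2 d1 d2 1 0 "\<lambda>k m. eN d1 d2 m" 0 1 k m]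
    by simp
qed

lemma tF_apply:
  assumes fin: "finite {q. v q \<noteq> 0}"
  shows "tF c1 c2 d1 d2 v (k,m) = (if (k,m) \<in> tB c1 c2 d1 d2 then
     v (k+1,m) * fN c1 c2 (k+1) + v (k,m+1) * fN d1 d2 (m+1) else 0)"
proof -
  have "tF c1 c2 d1 d2 = linext (\<lambda>(k,m) p. (\<lambda>k m. fN c1 c2 k) k m * tz c1 c2 d1 d2 (k+(-1)) (m+0) p
      + (\<lambda>k m. fN d1 d2 m) k m * tz c1 c2 d1 d2 (k+0) (m+(-1)) p)"
    unfolding tF_def by simp
  then show ?thesis using linext_two[OF fin, of "\<lambda>k m. fN c1 c2 k" c1 c2 d1 d2 "-1" 0 "\<lambda>k m. fN d1 d2 m" 0 "-1" k m]
    by simp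
qed

lemma tH_apply:
  assumes fin: "finite {q. v q \<noteq> 0}"
  shows "tH c1 c2 d1 d2 v (k,m) = (if (k,m) \<in> tB c1 c2 d1 d2 then
     v (k,m) * (hN c1 c2 k + hN d1 d2 m) else 0)"
proof -
  have "tH c1 c2 d1 d2 = linext (\<lambda>(k,m) p. (\<lambda>k m. hN c1 c2 k) k m * tz c1 c2 d1 d2 (k+0) (m+0) p
      + (\<lambda>k m. hN d1 d2 m) k m * tz c1 c2 d1 d2 (k+0) (m+0) p)"
    unfolding tH_def by (simp add: distrib_right)
  then show ?thesis using linext_two[OF fin, of "\<lambda>k m. hN c1 c2 k" c1 c2 d1 d2 0 0 "\<lambda>k m. hN d1 d2 m" 0 0 k m]
    by (simp add: distrib_left)
qed

lemma tE_tV: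
  assumes v: "v \<in> tV c1 c2 d1 d2"
  shows "tE c1 c2 d1 d2 v \<in> tV c1 c2 d1 d2"
proof -
  have fin: "finite {q. v q \<noteq> 0}" using v by (simp add: tV_def)
  let ?S = "{q. v q \<noteq> 0}"
  have sub: "{q. tE c1 c2 d1 d2 v q \<noteq> 0} \<subseteq> (\<lambda>(k,m). (k+1,m)) ` ?S \<union> (\<lambda>(k,m). (k,m+1)) ` ?S"
  proof
    fix q assume "q \<in> {q. tE c1 c2 d1 d2 v q \<noteq> 0}"
    then obtain k m where q: "q = (k,m)" and ne: "tE c1 c2 d1 d2 v (k,m) \<noteq> 0" by (cases q) auto
    from ne have "v (k-1,m) \<noteq> 0 \<or> v (k,m-1) \<noteq> 0" by (auto simp: tE_apply[OF fin] split: if_splits)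
    then show "q \<in> (\<lambda>(k,m). (k+1,m)) ` ?S \<union> (\<lambda>(k,m). (k,m+1)) ` ?S"
    proof
      assume "v (k-1,m) \<noteq> 0" then show ?thesis unfolding q by (auto intro!: image_eqI[of _ _ "(k-1,m)"])
    next
      assume "v (k,m-1) \<noteq> 0" then show ?thesis unfolding q by (auto intro!: image_eqI[of _ _ "(k,m-1)"])
    qed
  qed
  have "finite {q. tE c1 c2 d1 d2 v q \<noteq> 0}" by (rule finite_subset[OF sub]) (use fin in auto)
  moreover have "{q. tE c1 c2 d1 d2 v q \<noteq> 0} \<subseteq> tB c1 c2 d1 d2"
    by (auto simp: tE_apply[OF fin] split: if_splits)
  ultimately show ?thesis by (simp add: tV_def)
qed

lemma tF_tV:
  assumes v: "v \<in> tV c1 c2 d1 d2"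
  shows "tF c1 c2 d1 d2 v \<in> tV c1 c2 d1 d2"
proof -
  have fin: "finite {q. v q \<noteq> 0}" using v by (simp add: tV_def)
  let ?S = "{q. v q \<noteq> 0}"
  have sub: "{q. tF c1 c2 d1 d2 v q \<noteq> 0} \<subseteq> (\<lambda>(k,m). (k-1,m)) ` ?S \<union> (\<lambda>(k,m). (k,m-1)) ` ?S"
  proof
    fix q assume "q \<in> {q. tF c1 c2 d1 d2 v q \<noteq> 0}"
    then obtain k m where q: "q = (k,m)" and ne: "tF c1 c2 d1 d2 v (k,m) \<noteq> 0" by (cases q) auto
    from ne have "v (k+1,m) \<noteq> 0 \<or> v (k,m+1) \<noteq> 0" by (auto simp: tF_apply[OF fin] split: if_splits)
    then show "q \<in> (\<lambda>(k,m). (k-1,m)) ` ?S \<union> (\<lambda>(k,m). (k,m-1)) ` ?S"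
    proof
      assume "v (k+1,m) \<noteq> 0" then show ?thesis unfolding q by (auto intro!: image_eqI[of _ _ "(k+1,m)"])
    next
      assume "v (k,m+1) \<noteq> 0" then show ?thesis unfolding q by (auto intro!: image_eqI[of _ _ "(k,m+1)"])
    qed
  qed
  have "finite {q. tF c1 c2 d1 d2 v q \<noteq> 0}" by (rule finite_subset[OF sub]) (use fin in auto)
  moreover have "{q. tF c1 c2 d1 d2 v q \<noteq> 0} \<subseteq> tB c1 c2 d1 d2"
    by (auto simp: tF_apply[OF fin] split: if_splits)
  ultimately show ?thesis by (simp add: tV_def)
qed

lemma T_step:
  assumes v: "v \<in> tV c1 c2 d1 d2"
    and diag: "\<forall>k m. k + m \<noteq> n0 \<longrightarrow> v (k,m) = 0"
    and low: "\<forall>k m. m < - L \<longrightarrow> v (k,m) = 0"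
    and monoB: "\<forall>k m. (k,m) \<in> tB c1 c2 d1 d2 \<longrightarrow> (k+1,m) \<in> tB c1 c2 d1 d2 \<and> (k,m-1) \<in> tB c1 c2 d1 d2"
  shows "tF c1 c2 d1 d2 (tE c1 c2 d1 d2 v) \<in> tV c1 c2 d1 d2"
    "\<forall>k m. k + m \<noteq> n0 \<longrightarrow> tF c1 c2 d1 d2 (tE c1 c2 d1 d2 v) (k,m) = 0"
    "\<forall>k m. m < - L - 1 \<longrightarrow> tF c1 c2 d1 d2 (tE c1 c2 d1 d2 v) (k,m) = 0"
    "tF c1 c2 d1 d2 (tE c1 c2 d1 d2 v) (n0+L+1, -L-1) = v (n0+L,-L) * (eN c1 c2 (n0+L) * fN d1 d2 (-L))"
proof -
  have fin: "finite {q. v q \<noteq> 0}" using v by (simp add: tV_def)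
  have supp: "\<And>q. v q \<noteq> 0 \<Longrightarrow> q \<in> tB c1 c2 d1 d2" using v by (auto simp: tV_def)
  have Ev: "tE c1 c2 d1 d2 v \<in> tV c1 c2 d1 d2" by (rule tE_tV[OF v])
  have finE: "finite {q. tE c1 c2 d1 d2 v q \<noteq> 0}" using Ev by (simp add: tV_def)
  note F = tF_apply[OF finE] and E = tE_apply[OF fin]
  show "tF c1 c2 d1 d2 (tE c1 c2 d1 d2 v) \<in> tV c1 c2 d1 d2" by (rule tF_tV[OF Ev])
  show "\<forall>k m. k + m \<noteq> n0 \<longrightarrow> tF c1 c2 d1 d2 (tE c1 c2 d1 d2 v) (k,m) = 0"
  proof (intro allI impI)
    fix k m assume "k + m \<noteq> n0"
    then have "v (k,m) = 0" "v (k+1,m-1) = 0" "v (k-1,m+1) = 0" using diag by auto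
    then show "tF c1 c2 d1 d2 (tE c1 c2 d1 d2 v) (k,m) = 0" by (simp add: F E)
  qed
  show "\<forall>k m. m < - L - 1 \<longrightarrow> tF c1 c2 d1 d2 (tE c1 c2 d1 d2 v) (k,m) = 0"
  proof (intro allI impI)
    fix k m assume "m < - L - 1"
    then have "v (k,m) = 0" "v (k+1,m-1) = 0" "v (k-1,m+1) = 0" using low by auto
    then show "tF c1 c2 d1 d2 (tE c1 c2 d1 d2 v) (k,m) = 0" by (simp add: F E)
  qed
  have z: "\<And>k m. m < -L \<Longrightarrow> v (k,m) = 0" using low by auto
  show "tF c1 c2 d1 d2 (tE c1 c2 d1 d2 v) (n0+L+1, -L-1) = v (n0+L,-L) * (eN c1 c2 (n0+L) * fN d1 d2 (-L))"
  proof (cases "v (n0+L,-L) = 0")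
    case True then show ?thesis using z by (simp add: F E)
  next
    case False
    then have b: "(n0+L,-L) \<in> tB c1 c2 d1 d2" by (rule supp)
    then have b1: "(n0+L+1,-L) \<in> tB c1 c2 d1 d2" using monoB by auto
    then have b2: "(n0+L+1,-L-1) \<in> tB c1 c2 d1 d2" using monoB by auto
    show ?thesis using z b1 b2 by (simp add: F E algebra_simps)
  qed
qed

lemma T_iter:
  assumes monoB: "\<forall>k m. (k,m) \<in> tB c1 c2 d1 d2 \<longrightarrow> (k+1,m) \<in> tB c1 c2 d1 d2 \<and> (k,m-1) \<in> tB c1 c2 d1 d2"
    and b0: "(l0+n0, -l0) \<in> tB c1 c2 d1 d2"
  defines "W \<equiv> \<lambda>i. ((tF c1 c2 d1 d2 \<circ> tE c1 c2 d1 d2) ^^ i) (tz c1 c2 d1 d2 (l0+n0) (-l0))"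
  shows "W i \<in> tV c1 c2 d1 d2 \<and> (\<forall>k m. k + m \<noteq> n0 \<longrightarrow> W i (k,m) = 0)
     \<and> (\<forall>k m. m < -(l0 + int i) \<longrightarrow> W i (k,m) = 0)
     \<and> W i (n0 + l0 + int i, -(l0 + int i)) = (\<Prod>j<i. eN c1 c2 (n0+l0+int j) * fN d1 d2 (-(l0+int j)))"
proof (induction i)
  case 0
  have "W 0 = tz c1 c2 d1 d2 (l0+n0) (-l0)" by (simp add: W_def)
  moreover have "{q. tz c1 c2 d1 d2 (l0+n0) (-l0) q \<noteq> 0} = {(l0+n0, -l0)}"
    using b0 by (auto simp: tz_def)
  ultimately show ?case using b0 by (auto simp: tV_def tz_def)
next
  case (Suc i)
  let ?L = "l0 + int i"
  have W: "W (Suc i) = tF c1 c2 d1 d2 (tE c1 c2 d1 d2 (W i))" by (simp add: W_def)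
  have a: "W i \<in> tV c1 c2 d1 d2" "\<forall>k m. k + m \<noteq> n0 \<longrightarrow> W i (k,m) = 0"
     "\<forall>k m. m < - ?L \<longrightarrow> W i (k,m) = 0" using Suc.IH by auto
  note st = T_step[OF a monoB]
  have p: "(n0 + l0 + int (Suc i), -(l0 + int (Suc i))) = (n0 + ?L + 1, -?L - 1)" by simp
  have v: "W i (n0 + ?L, -?L) = (\<Prod>j<i. eN c1 c2 (n0+l0+int j) * fN d1 d2 (-(l0+int j)))"
    using Suc.IH by (simp add: add.assoc)
  show ?case unfolding W
    apply (intro conjI)
    using st(1) apply simp
    using st(2) apply simp
    using st(3) apply (simp add: algebra_simps)
    apply (subst p)
    apply (subst st(4))
    apply (subst v)
    apply (simp add: algebra_simps)
    done
qed

lemma actFE_le: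
  assumes "degree P \<le> N"
  shows "actFE c1 c2 d1 d2 P v p = (\<Sum>i\<le>N. coeff P i * (((tF c1 c2 d1 d2 \<circ> tE c1 c2 d1 d2) ^^ i) v) p)"
  unfolding actFE_def
  by (rule sum.mono_neutral_left) (use assms in \<open>auto simp: coeff_eq_0\<close>)

lemma actFE_add:
  "actFE c1 c2 d1 d2 (P + Q) v p = actFE c1 c2 d1 d2 P v p + actFE c1 c2 d1 d2 Q v p"
proof -
  let ?N = "max (degree P) (degree Q)"
  have "degree (P + Q) \<le> ?N" by (rule degree_add_le) auto
  then show ?thesis
    by (simp add: actFE_le[of "P+Q" ?N] actFE_le[of P ?N] actFE_le[of Q ?N] sum.distrib distrib_right)
qed

lemma actFE_diff:
  "actFE c1 c2 d1 d2 (P - Q) v p = actFE c1 c2 d1 d2 P v p - actFE c1 c2 d1 d2 Q v p"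
proof -
  let ?N = "max (degree P) (degree Q)"
  have "degree (P - Q) \<le> ?N" by (rule degree_diff_le) auto
  then show ?thesis
    by (simp add: actFE_le[of "P-Q" ?N] actFE_le[of P ?N] actFE_le[of Q ?N] sum_subtractf left_diff_distrib)
qed

lemma rho_props:
  fixes P :: "complex poly"
  assumes monoB: "\<forall>k m. (k,m) \<in> tB c1 c2 d1 d2 \<longrightarrow> (k+1,m) \<in> tB c1 c2 d1 d2 \<and> (k,m-1) \<in> tB c1 c2 d1 d2"
    and b0: "(l0+n0, -l0) \<in> tB c1 c2 d1 d2"
  defines "R \<equiv> actFE c1 c2 d1 d2 P (tz c1 c2 d1 d2 (l0+n0) (-l0))"
  shows "R \<in> tV c1 c2 d1 d2 \<and> (\<forall>k m. k + m \<noteq> n0 \<longrightarrow> R (k,m) = 0)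
     \<and> (\<forall>k m. m < -(l0 + int (degree P)) \<longrightarrow> R (k,m) = 0)
     \<and> R (n0 + l0 + int (degree P), -(l0 + int (degree P))) = lead_coeff P * (\<Prod>j<degree P. eN c1 c2 (n0+l0+int j) * fN d1 d2 (-(l0+int j)))"
proof -
  define W where "W \<equiv> \<lambda>i. ((tF c1 c2 d1 d2 \<circ> tE c1 c2 d1 d2) ^^ i) (tz c1 c2 d1 d2 (l0+n0) (-l0))"
  have TI: "\<And>i. W i \<in> tV c1 c2 d1 d2 \<and> (\<forall>k m. k + m \<noteq> n0 \<longrightarrow> W i (k,m) = 0)
     \<and> (\<forall>k m. m < -(l0 + int i) \<longrightarrow> W i (k,m) = 0)
     \<and> W i (n0 + l0 + int i, -(l0 + int i)) = (\<Prod>j<i. eN c1 c2 (n0+l0+int j) * fN d1 d2 (-(l0+int j)))"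
    unfolding W_def by (rule T_iter[OF monoB b0])
  let ?d = "degree P"
  have R: "\<And>p. R p = (\<Sum>i\<le>?d. coeff P i * W i p)" unfolding R_def actFE_def W_def by simp
  have sub: "{p. R p \<noteq> 0} \<subseteq> (\<Union>i\<le>?d. {p. W i p \<noteq> 0})"
  proof
    fix p assume "p \<in> {p. R p \<noteq> 0}"
    then have "(\<Sum>i\<le>?d. coeff P i * W i p) \<noteq> 0" by (simp add: R)
    then obtain i where "i \<le> ?d" "coeff P i * W i p \<noteq> 0" by (meson atMost_iff sum.neutral)
    then show "p \<in> (\<Union>i\<le>?d. {p. W i p \<noteq> 0})" by auto
  qed
  have "finite (\<Union>i\<le>?d. {p. W i p \<noteq> 0})" using TI by (auto simp: tV_def)
  moreover have "(\<Union>i\<le>?d. {p. W i p \<noteq> 0}) \<subseteq> tB c1 c2 d1 d2"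
  proof (rule UN_least)
    fix i show "{p. W i p \<noteq> 0} \<subseteq> tB c1 c2 d1 d2" using TI[of i] by (simp add: tV_def)
  qed
  ultimately have "R \<in> tV c1 c2 d1 d2" using sub unfolding tV_def by (auto intro: finite_subset)
  moreover have "\<forall>k m. k + m \<noteq> n0 \<longrightarrow> R (k,m) = 0" using TI by (simp add: R)
  moreover have "\<forall>k m. m < -(l0 + int ?d) \<longrightarrow> R (k,m) = 0"
  proof (intro allI impI)
    fix k m assume "m < -(l0 + int ?d)"
    then have "\<And>i. i \<le> ?d \<Longrightarrow> W i (k,m) = 0" using TI by force
    then show "R (k,m) = 0" by (simp add: R)
  qed
  moreover have "R (n0 + l0 + int ?d, -(l0 + int ?d)) = lead_coeff P * (\<Prod>j<?d. eN c1 c2 (n0+l0+int j) * fN d1 d2 (-(l0+int j)))"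
  proof -
    have "{..?d} = insert ?d {..<?d}" by auto
    then have "R (n0 + l0 + int ?d, -(l0 + int ?d)) = coeff P ?d * W ?d (n0 + l0 + int ?d, -(l0 + int ?d))
       + (\<Sum>i<?d. coeff P i * W i (n0 + l0 + int ?d, -(l0 + int ?d)))"
      by (simp add: R)
    moreover have "\<And>i. i < ?d \<Longrightarrow> W i (n0 + l0 + int ?d, -(l0 + int ?d)) = 0" using TI by force
    ultimately show ?thesis using TI by simp
  qed
  ultimately show ?thesis by blast
qed

lemma generic_main:
  assumes monoB: "\<forall>k m. (k,m) \<in> tB c1 c2 d1 d2 \<longrightarrow> (k+1,m) \<in> tB c1 c2 d1 d2 \<and> (k,m-1) \<in> tB c1 c2 d1 d2"
    and b0: "(l0+n0, -l0) \<in> tB c1 c2 d1 d2"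
    and below: "\<forall>k m. (k,m) \<in> tB c1 c2 d1 d2 \<longrightarrow> k + m = n0 \<longrightarrow> m \<le> -l0"
    and alpha: "\<forall>j::nat. eN c1 c2 (n0+l0+int j) * fN d1 d2 (-(l0+int j)) \<noteq> 0"
  defines "G \<equiv> {v. v \<in> tV c1 c2 d1 d2 \<and> (\<forall>k m. k + m \<noteq> n0 \<longrightarrow> v (k,m) = 0)}"
    and "\<rho> \<equiv> \<lambda>P. actFE c1 c2 d1 d2 P (tz c1 c2 d1 d2 (l0+n0) (-l0))"
  shows "bij_betw \<rho> (UNIV :: complex poly set) G"
proof -
  define pr where "pr \<equiv> \<lambda>d::nat. (\<Prod>j<d. eN c1 c2 (n0+l0+int j) * fN d1 d2 (-(l0+int j)))"
  have prnz: "pr d \<noteq> 0" for d unfolding pr_def using alpha by simp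
  have RP': "\<rho> P \<in> G \<and> (\<forall>k m. m < -(l0 + int (degree P)) \<longrightarrow> \<rho> P (k,m) = 0)
     \<and> \<rho> P (n0 + l0 + int (degree P), -(l0 + int (degree P))) = lead_coeff P * pr (degree P)" for P
    using rho_props[OF monoB b0, of P] unfolding G_def pr_def \<rho>_def by auto
  have add: "\<rho> (P + Q) = (\<lambda>p. \<rho> P p + \<rho> Q p)" for P Q
    unfolding \<rho>_def by (rule ext) (rule actFE_add)
  have diff: "\<rho> (P - Q) = (\<lambda>p. \<rho> P p - \<rho> Q p)" for P Q
    unfolding \<rho>_def by (rule ext) (rule actFE_diff)
  have zero: "\<rho> 0 = (\<lambda>p. 0)" unfolding \<rho>_def actFE_def by simp
  have inj: "inj \<rho>"
  proof (rule injI)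
    fix P Q assume eq: "\<rho> P = \<rho> Q"
    show "P = Q"
    proof (rule ccontr)
      assume "P \<noteq> Q"
      then have "lead_coeff (P - Q) \<noteq> 0" by (metis leading_coeff_0_iff right_minus_eq)
      then have "\<rho> (P - Q) (n0 + l0 + int (degree (P-Q)), -(l0 + int (degree (P-Q)))) \<noteq> 0"
        using RP'[of "P-Q"] prnz by simp
      then show False using eq by (simp add: diff)
    qed
  qed
  have Gdiff: "(\<lambda>p. v p - w p) \<in> G" if "v \<in> G" "w \<in> G" for v w
  proof -
    have "{p. v p - w p \<noteq> 0} \<subseteq> {p. v p \<noteq> 0} \<union> {p. w p \<noteq> 0}" by auto
    then show ?thesis using that unfolding G_def tV_def by (auto intro: finite_subset)
  qed
  have ind: "\<forall>v\<in>G. (\<forall>k m. m \<le> -(l0 + int n) \<longrightarrow> v (k,m) = 0) \<longrightarrow> v \<in> range \<rho>" for n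
  proof (induction n)
    case 0
    show ?case
    proof (intro ballI impI)
      fix v assume vG: "v \<in> G" and z: "\<forall>k m. m \<le> -(l0 + int 0) \<longrightarrow> v (k,m) = 0"
      have "v = (\<lambda>p. 0)"
      proof (rule ext)
        fix p show "v p = 0"
        proof (rule ccontr)
          assume ne: "v p \<noteq> 0"
          obtain k m where p: "p = (k,m)" by (cases p)
          have "(k,m) \<in> tB c1 c2 d1 d2" using vG ne p unfolding G_def tV_def by auto
          moreover have "k + m = n0" using vG ne p unfolding G_def by auto
          ultimately have "m \<le> -l0" using below by auto
          then show False using z ne p by auto
        qed
      qed
      then show "v \<in> range \<rho>" using zero by (metis rangeI)
    qed
  next
    case (Suc n)
    show ?case
    proof (intro ballI impI)
      fix v assume vG: "v \<in> G" and z: "\<forall>k m. m \<le> -(l0 + int (Suc n)) \<longrightarrow> v (k,m) = 0"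
      let ?t = "v (n0 + l0 + int n, -(l0 + int n))"
      define c where "c = ?t / pr n"
      define P0 where "P0 = monom c n"
      have top: "\<rho> P0 (n0 + l0 + int n, -(l0 + int n)) = ?t"
      proof (cases "c = 0")
        case True
        then have "?t = 0" using prnz unfolding c_def by simp
        then show ?thesis using True zero unfolding P0_def by simp
      next
        case False
        then have "degree P0 = n" "lead_coeff P0 = c" unfolding P0_def by (auto simp: degree_monom_eq)
        then show ?thesis using RP'[of P0] prnz unfolding c_def by simp
      qed
      have low0: "\<forall>k m. m < -(l0 + int n) \<longrightarrow> \<rho> P0 (k,m) = 0"
      proof (cases "c = 0")
        case True then show ?thesis using zero unfolding P0_def by simp
      next
        case False
        then have "degree P0 = n" unfolding P0_def by (auto simp: degree_monom_eq)
        then show ?thesis using RP'[of P0] by simp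
      qed
      define w where "w = (\<lambda>p. v p - \<rho> P0 p)"
      have wG: "w \<in> G" unfolding w_def by (rule Gdiff[OF vG]) (use RP' in auto)
      have wz: "\<forall>k m. m \<le> -(l0 + int n) \<longrightarrow> w (k,m) = 0"
      proof (intro allI impI)
        fix k m assume m: "m \<le> -(l0 + int n)"
        show "w (k,m) = 0"
        proof (cases "m = -(l0 + int n)")
          case True
          show ?thesis
          proof (cases "k + m = n0")
            case True
            then have "k = n0 + l0 + int n" using \<open>m = _\<close> by simp
            then show ?thesis using top \<open>m = _\<close> unfolding w_def by simp
          next
            case False
            then show ?thesis using vG wG unfolding G_def by auto
          qed
        next
          case False
          then have "m < -(l0 + int n)" using m by simp
          then show ?thesis using z low0 unfolding w_def by auto
        qed
      qed
      obtain Q where "w = \<rho> Q" using Suc.IH wG wz by blast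
      then have "v = \<rho> (Q + P0)" unfolding add w_def by (metis (no_types, lifting) diff_add_cancel ext)
      then show "v \<in> range \<rho>" by simp
    qed
  qed
  have surj: "v \<in> range \<rho>" if vG: "v \<in> G" for v
  proof -
    let ?S = "{q. v q \<noteq> 0}"
    have fin: "finite ?S" using vG unfolding G_def tV_def by simp
    define M where "M = Min (insert 0 (snd ` ?S))"
    have M: "M \<le> snd q" if "v q \<noteq> 0" for q unfolding M_def using fin that by (auto intro: Min_le)
    define n where "n = nat (- M - l0) + 1"
    have "\<forall>k m. m \<le> -(l0 + int n) \<longrightarrow> v (k,m) = 0"
    proof (intro allI impI)
      fix k m assume "m \<le> -(l0 + int n)"
      then have "m < M" unfolding n_def by linarith
      then show "v (k,m) = 0" using M[of "(k,m)"] by force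
    qed
    then show ?thesis using ind vG by blast
  qed
  have "\<rho> ` UNIV = G"
  proof
    show "\<rho> ` UNIV \<subseteq> G" using RP' by auto
    show "G \<subseteq> \<rho> ` UNIV" using surj by auto
  qed
  then show ?thesis using inj by (simp add: bij_betw_def)
qed

lemma negint_Ints: "negint c \<Longrightarrow> c \<in> \<int>"
  unfolding negint_def by auto

lemma real_not_Ints:
  assumes "-1 < r" "r < 0" shows "complex_of_real r \<notin> \<int>"
proof
  assume "complex_of_real r \<in> \<int>"
  then obtain n where "complex_of_real r = of_int n" by (auto elim: Ints_cases)
  then have "r = of_int n" by (metis Re_complex_of_real of_real_of_int_eq)
  then have "-1 < n" "n < 0" using assms by simp_all
  then show False by simp
qed

lemma nonreal_not_Ints: "y \<noteq> 0 \<Longrightarrow> Complex x y \<notin> \<int>"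
  by (auto elim!: Ints_cases simp: complex_eq_iff)

lemma second_inK:
  assumes "a < 0" shows "inK (complex_of_real a) 0 m \<longleftrightarrow> m \<le> 0"
  using assms unfolding inK_def by auto

lemma second_fN:
  assumes "a < 0" "m \<le> 0" shows "fN (complex_of_real a) 0 m \<noteq> 0"
proof -
  have n0: "\<not> negint 0" unfolding negint_def by auto
  show ?thesis
  proof (cases "negint (complex_of_real a)")
    case True then show ?thesis using n0 by (simp add: fN_def)
  next
    case False
    have "complex_of_real a + of_int m \<noteq> 0"
    proof
      assume "complex_of_real a + of_int m = 0"
      then have "Re (complex_of_real a + of_int m) = 0" by simp
      then show False using assms by simp
    qed
    then show ?thesis using False n0 by (simp add: fN_def)
  qed
qed

lemma first_props:
  assumes first_factor:
    "(\<exists>b::real. b < 0 \<and> b1 = 0 \<and> b2 = complex_of_real b)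
     \<or> (\<exists>x y :: real. -1 \<le> x \<and> x < 0 \<and> y > 0 \<and>
          b1 = Complex (-1 - x) y \<and> b2 = Complex x y)
     \<or> (\<exists>a1 a2 :: real. -1 < a1 \<and> a1 < 0 \<and> -1 < a2 \<and> a2 < 0 \<and>
          b1 = complex_of_real a1 \<and> b2 = complex_of_real a2)"
  shows "((\<forall>k. inK b1 b2 k \<longleftrightarrow> 0 \<le> k) \<or> (\<forall>k. inK b1 b2 k))
     \<and> (\<forall>k. inK b1 b2 k \<longrightarrow> eN b1 b2 k \<noteq> 0)"
  using first_factor
proof (elim disjE exE conjE)
  fix b :: real assume b: "b < 0" "b1 = 0" "b2 = complex_of_real b"
  have n0: "\<not> negint 0" unfolding negint_def by auto
  have K: "inK b1 b2 k \<longleftrightarrow> 0 \<le> k" for k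
    using b unfolding inK_def by auto
  have "eN b1 b2 k \<noteq> 0" if "inK b1 b2 k" for k
  proof (cases "negint b2")
    case True then show ?thesis using b n0 by (simp add: eN_def)
  next
    case False
    have "b2 - of_int k \<noteq> 0"
    proof
      assume "b2 - of_int k = 0"
      then have "Re (b2 - of_int k) = 0" by simp
      then show False using b K that by simp
    qed
    then show ?thesis using b n0 False by (simp add: eN_def)
  qed
  then show ?thesis using K by blast
next
  fix x y :: real assume h: "-1 \<le> x" "x < 0" "0 < y" "b1 = Complex (-1 - x) y" "b2 = Complex x y"
  have ni: "b1 \<notin> \<int>" "b2 \<notin> \<int>" using h nonreal_not_Ints by auto
  then have nn: "\<not> negint b1" "\<not> negint b2" using negint_Ints by blast+
  have K: "inK b1 b2 k" for k using ni unfolding inK_def by auto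
  have "eN b1 b2 k \<noteq> 0" for k
  proof -
    have "Im (b2 - of_int k) \<noteq> 0" using h by simp
    then have "b2 - of_int k \<noteq> 0" by auto
    then show ?thesis using nn by (simp add: eN_def)
  qed
  then show ?thesis using K by blast
next
  fix a1 a2 :: real assume h: "-1 < a1" "a1 < 0" "-1 < a2" "a2 < 0" "b1 = complex_of_real a1" "b2 = complex_of_real a2"
  have ni: "b1 \<notin> \<int>" "b2 \<notin> \<int>" using h real_not_Ints by auto
  then have nn: "\<not> negint b1" "\<not> negint b2" using negint_Ints by blast+
  have K: "inK b1 b2 k" for k using ni unfolding inK_def by auto
  have "eN b1 b2 k \<noteq> 0" for k
  proof
    assume "eN b1 b2 k = 0"
    then have "b2 = of_int k" using nn by (simp add: eN_def)
    then have "b2 \<in> \<int>" by simp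
    then show False using ni by simp
  qed
  then show ?thesis using K by blast
qed

lemma least_int:
  assumes "\<exists>l::int. 0 \<le> l \<and> P l"
  shows "0 \<le> (LEAST l. 0 \<le> l \<and> P l) \<and> P (LEAST l. 0 \<le> l \<and> P l)
     \<and> (\<forall>l. 0 \<le> l \<and> l < (LEAST l. 0 \<le> l \<and> P l) \<longrightarrow> \<not> P l)"
proof -
  from assms obtain l where l: "0 \<le> l" "P l" by blast
  have "\<exists>n::nat. P (int n)" using l by (metis nonneg_int_cases)
  then obtain n where n: "P (int n)" "\<forall>m<n. \<not> P (int m)" using exists_least_iff[of "\<lambda>n. P (int n)"] by blast
  have "(LEAST l. 0 \<le> l \<and> P l) = int n"
  proof (rule Least_equality)
    show "0 \<le> int n \<and> P (int n)" using n by simp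
    fix y :: int assume y: "0 \<le> y \<and> P y"
    show "int n \<le> y"
    proof (rule ccontr)
      assume "\<not> int n \<le> y"
      then have "nat y < n" using y by linarith
      then have "\<not> P (int (nat y))" using n by blast
      then show False using y by simp
    qed
  qed
  then show ?thesis using n by (metis nonneg_int_cases of_nat_0_le_iff of_nat_less_iff)
qed

theorem mainTheorem2:
  fixes b1 b2 :: complex and a :: real and n0 :: int
  assumes first_factor:
    "(\<exists>b::real. b < 0 \<and> b1 = 0 \<and> b2 = complex_of_real b)
     \<or> (\<exists>x y :: real. -1 \<le> x \<and> x < 0 \<and> y > 0 \<and>
          b1 = Complex (-1 - x) y \<and> b2 = Complex x y)
     \<or> (\<exists>a1 a2 :: real. -1 < a1 \<and> a1 < 0 \<and> -1 < a2 \<and> a2 < 0 \<and>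
          b1 = complex_of_real a1 \<and> b2 = complex_of_real a2)"
    and a_neg: "a < 0"
  defines "l0 \<equiv> (LEAST l::int. 0 \<le> l \<and> inK b1 b2 (l + n0))"
  defines "zn0 \<equiv> tz b1 b2 (complex_of_real a) 0 (l0 + n0) (- l0)"
  defines "Vn0 \<equiv> tWeight b1 b2 (complex_of_real a) 0
                    (b1 - b2 + complex_of_real a + 2 * of_int n0)"
  defines "\<rho> \<equiv> (\<lambda>P. actFE b1 b2 (complex_of_real a) 0 P zn0)"
  shows "Vn0 = range \<rho> \<and> bij_betw \<rho> (UNIV :: complex poly set) Vn0"
proof -
  let ?c = "complex_of_real a"
  let ?B = "tB b1 b2 ?c 0"
  note FP = first_props[OF first_factor]
  have K2: "inK ?c 0 m \<longleftrightarrow> m \<le> 0" for m by (rule second_inK[OF a_neg])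
  have Bc: "(k,m) \<in> ?B \<longleftrightarrow> inK b1 b2 k \<and> m \<le> 0" for k m
    using K2 by (simp add: tB_def)
  have mono1: "inK b1 b2 k \<Longrightarrow> inK b1 b2 (k+1)" for k using FP by auto
  have monoj: "inK b1 b2 k \<Longrightarrow> inK b1 b2 (k + int j)" for k j
  proof (induction j)
    case 0 then show ?case by simp
  next
    case (Suc j) then show ?case using mono1[of "k + int j"] by (simp add: algebra_simps)
  qed
  have ex: "\<exists>l::int. 0 \<le> l \<and> inK b1 b2 (l + n0)"
  proof -
    have "0 \<le> \<bar>n0\<bar>" "0 \<le> \<bar>n0\<bar> + n0" by auto
    then show ?thesis using FP by blast
  qed
  note L = least_int[OF ex, folded l0_def]
  have monoB: "\<forall>k m. (k,m) \<in> ?B \<longrightarrow> (k+1,m) \<in> ?B \<and> (k,m-1) \<in> ?B"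
    using mono1 by (simp add: Bc)
  have b0: "(l0+n0, -l0) \<in> ?B" using L by (simp add: Bc)
  have below: "\<forall>k m. (k,m) \<in> ?B \<longrightarrow> k + m = n0 \<longrightarrow> m \<le> -l0"
  proof (intro allI impI)
    fix k m assume km: "(k,m) \<in> ?B" "k + m = n0"
    then have "inK b1 b2 ((-m) + n0)" "0 \<le> -m" using Bc by (auto simp: algebra_simps)
    moreover have "\<not> (-m < l0)" using L calculation by blast
    ultimately show "m \<le> -l0" by linarith
  qed
  have alpha: "\<forall>j::nat. eN b1 b2 (n0+l0+int j) * fN ?c 0 (-(l0+int j)) \<noteq> 0"
  proof
    fix j :: nat
    have "inK b1 b2 (l0 + n0 + int j)" using monoj L by blast
    then have "eN b1 b2 (n0+l0+int j) \<noteq> 0" using FP by (simp add: add.commute)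
    moreover have "fN ?c 0 (-(l0+int j)) \<noteq> 0" using second_fN[OF a_neg] L by simp
    ultimately show "eN b1 b2 (n0+l0+int j) * fN ?c 0 (-(l0+int j)) \<noteq> 0" by simp
  qed
  have V: "Vn0 = {v. v \<in> tV b1 b2 ?c 0 \<and> (\<forall>k m. k + m \<noteq> n0 \<longrightarrow> v (k,m) = 0)}"
  proof (intro set_eqI iffI)
    fix v assume "v \<in> Vn0"
    then have v: "v \<in> tV b1 b2 ?c 0" and H: "tH b1 b2 ?c 0 v = (\<lambda>p. (b1 - b2 + ?c + 2 * of_int n0) * v p)"
      unfolding Vn0_def tWeight_def by auto
    have fin: "finite {q. v q \<noteq> 0}" using v by (simp add: tV_def)
    have "\<forall>k m. k + m \<noteq> n0 \<longrightarrow> v (k,m) = 0"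
    proof (intro allI impI)
      fix k m assume ne: "k + m \<noteq> n0"
      show "v (k,m) = 0"
      proof (rule ccontr)
        assume nz: "v (k,m) \<noteq> 0"
        then have inB: "(k,m) \<in> ?B" using v by (auto simp: tV_def)
        have "v (k,m) * (hN b1 b2 k + hN ?c 0 m) = (b1 - b2 + ?c + 2 * of_int n0) * v (k,m)"
          using fun_cong[OF H, of "(k,m)"] inB by (simp add: tH_apply[OF fin])
        then have "v (k,m) * (2 * of_int (k + m - n0)) = 0" by (simp add: hN_def algebra_simps)
        then have "(of_int (2 * (k + m - n0)) :: complex) = 0" using nz by simp
        then show False using ne by (simp only: of_int_eq_0_iff) simp
      qed
    qed
    then show "v \<in> {v. v \<in> tV b1 b2 ?c 0 \<and> (\<forall>k m. k + m \<noteq> n0 \<longrightarrow> v (k,m) = 0)}" using v by simp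
  next
    fix v assume "v \<in> {v. v \<in> tV b1 b2 ?c 0 \<and> (\<forall>k m. k + m \<noteq> n0 \<longrightarrow> v (k,m) = 0)}"
    then have v: "v \<in> tV b1 b2 ?c 0" and D: "\<forall>k m. k + m \<noteq> n0 \<longrightarrow> v (k,m) = 0" by auto
    have fin: "finite {q. v q \<noteq> 0}" using v by (simp add: tV_def)
    have "tH b1 b2 ?c 0 v = (\<lambda>p. (b1 - b2 + ?c + 2 * of_int n0) * v p)"
    proof (rule ext)
      fix p :: "int \<times> int" obtain k m where p: "p = (k,m)" by (cases p)
      show "tH b1 b2 ?c 0 v p = (b1 - b2 + ?c + 2 * of_int n0) * v p"
      proof (cases "v (k,m) = 0")
        case True then show ?thesis using p by (simp add: tH_apply[OF fin])
      next
        case False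
        then have inB: "(k,m) \<in> ?B" and s: "k + m = n0" using v D by (auto simp: tV_def)
        then have "(of_int n0 :: complex) = of_int k + of_int m" by (metis of_int_add)
        then show ?thesis using p inB by (simp add: tH_apply[OF fin] hN_def algebra_simps)
      qed
    qed
    then show "v \<in> Vn0" using v unfolding Vn0_def tWeight_def by simp
  qed
  have bij: "bij_betw \<rho> (UNIV :: complex poly set) Vn0"
    unfolding V \<rho>_def zn0_def by (rule generic_main[OF monoB b0 below alpha])
  then show ?thesis by (simp add: bij_betw_def)
qed

end
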